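(* Let $p\in(0,1)$, $\gamma>0$, $B>0$, $w,N\in\mathbb{N}$, let $(\xi_j^{(N)*})_{j=1}^N$ be the unique maximizer of $\mathcal{T}_N$, and let $B^{(N)}=B-\sum_{i=1}^N\xi_i^{(N)*}$. Then $$\xi_N^{(N)*}=\frac{B^{(N)}}{w},$$ and for every $j\in\{1,\dots,N-1\}$, $$\frac{1-p}{1+\gamma\xi_{j+1}^{(N)*}}=\frac{1}{1+\gamma\xi_j^{(N)*}}-\frac{p}{1+\frac{\gamma}{w}\left(B-\sum_{i=1}^{j}\xi_i^{(N)*}\right)}.$$
   Context: Logarithms are base 2. For an admissible (nonnegative, with sum at most $B$) sequence $(x_j)_{j\ge1}$, $$\mathcal{T}_\infty(x_1,x_2,\dots)=\sum_{k=1}^{w}p^2(1-p)^{k-1}\frac{k}{2}\log_2\!\Big(1+\gamma\frac{B}{k}\Big)+\sum_{j=1}^{\infty}p(1-p)^{j+w-1}\frac12\log_2(1+\gamma x_j)+\sum_{k=1}^{\infty}p^2(1-p)^{k+w-1}\frac{w}{2}\log_2\!\Big(1+\gamma\frac{B-\sum_{j=1}^{k}x_j}{w}\Big).$$ For $N\in\mathbb{N}$ and $\xi_1,\dots,\xi_N\ge0$ with $\sum_{j=1}^N\xi_j\le B$, define $\mathcal{T}_N(\xi_1,\dots,\xi_N)=\mathcal{T}_\infty(\xi_1,\dots,\xi_N,0,0,\dots)$. $\mathcal{T}_N$ has a unique maximizer over this compact set, denoted $(\xi_j^{(N)*})_{j=1}^N$. *)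

theory Defs
  imports "HOL-Analysis.Analysis"
begin

text \<open>Sequences are functions nat => real; only indices j >= 1 are used
  (x 0 is ignored), matching the paper's indexing (x_j)_{j>=1}.\<close>

definition T_inf :: "real \<Rightarrow> real \<Rightarrow> real \<Rightarrow> nat \<Rightarrow> (nat \<Rightarrow> real) \<Rightarrow> real" where
  "T_inf p \<gamma> B w x =
     (\<Sum>k=1..w. p\<^sup>2 * (1 - p) ^ (k - 1) * (real k / 2) * log 2 (1 + \<gamma> * B / real k))
   + (\<Sum>j. p * (1 - p) ^ (Suc j + w - 1) * (1/2) * log 2 (1 + \<gamma> * x (Suc j)))
   + (\<Sum>k. p\<^sup>2 * (1 - p) ^ (Suc k + w - 1) * (real w / 2)
          * log 2 (1 + \<gamma> * (B - (\<Sum>j=1..Suc k. x j)) / real w))"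

definition T_N :: "real \<Rightarrow> real \<Rightarrow> real \<Rightarrow> nat \<Rightarrow> nat \<Rightarrow> (nat \<Rightarrow> real) \<Rightarrow> real" where
  "T_N p \<gamma> B w N \<xi> = T_inf p \<gamma> B w (\<lambda>j. if 1 \<le> j \<and> j \<le> N then \<xi> j else 0)"

definition feasible_N :: "real \<Rightarrow> nat \<Rightarrow> (nat \<Rightarrow> real) \<Rightarrow> bool" where
  "feasible_N B N \<xi> \<longleftrightarrow> (\<forall>j\<in>{1..N}. 0 \<le> \<xi> j) \<and> (\<Sum>j=1..N. \<xi> j) \<le> B"

definition is_maximizer_N :: "real \<Rightarrow> real \<Rightarrow> real \<Rightarrow> nat \<Rightarrow> nat \<Rightarrow> (nat \<Rightarrow> real) \<Rightarrow> bool" where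
  "is_maximizer_N p \<gamma> B w N \<xi> \<longleftrightarrow> feasible_N B N \<xi> \<and>
     (\<forall>\<eta>. feasible_N B N \<eta> \<longrightarrow> T_N p \<gamma> B w N \<eta> \<le> T_N p \<gamma> B w N \<xi>)"

end

theory Submission
  imports Defs
begin

definition Ssum :: "(nat \<Rightarrow> real) \<Rightarrow> nat \<Rightarrow> real" where
  "Ssum \<eta> k = (\<Sum>i=1..k. \<eta> i)"

definition Fm :: "real \<Rightarrow> real \<Rightarrow> real \<Rightarrow> nat \<Rightarrow> nat \<Rightarrow> (nat \<Rightarrow> real) \<Rightarrow> real" where
  "Fm p \<gamma> B w N \<eta> = (\<Sum>j=1..N. (1-p)^j * ln (1 + \<gamma> * \<eta> j))
     + real w * ((\<Sum>k=1..N-1. p * (1-p)^k * ln (1 + \<gamma> * (B - Ssum \<eta> k) / real w))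
                 + (1-p)^N * ln (1 + \<gamma> * (B - Ssum \<eta> N) / real w))"

lemma max_right:
  fixes \<phi> :: "real \<Rightarrow> real"
  assumes "(\<phi> has_real_derivative D) (at 0)" "\<delta> > 0" "\<forall>t. 0 < t \<and> t < \<delta> \<longrightarrow> \<phi> t \<le> \<phi> 0"
  shows "D \<le> 0"
proof (rule ccontr)
  assume "\<not> D \<le> 0"
  then obtain d where d: "d > 0" "\<forall>h>0. h < d \<longrightarrow> \<phi> 0 < \<phi> (0 + h)"
    using DERIV_pos_inc_right[OF assms(1)] by force
  have "\<phi> 0 < \<phi> (min d \<delta> / 2)" using d assms(2) by auto
  moreover have "\<phi> (min d \<delta> / 2) \<le> \<phi> 0" using assms d by auto
  ultimately show False by simp
qed

lemma max_left:
  fixes \<phi> :: "real \<Rightarrow> real"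
  assumes "(\<phi> has_real_derivative D) (at 0)" "\<delta> > 0" "\<forall>t. 0 < t \<and> t < \<delta> \<longrightarrow> \<phi> (-t) \<le> \<phi> 0"
  shows "D \<ge> 0"
proof (rule ccontr)
  assume "\<not> D \<ge> 0"
  then obtain d where d: "d > 0" "\<forall>h>0. h < d \<longrightarrow> \<phi> 0 < \<phi> (0 - h)"
    using DERIV_neg_dec_left[OF assms(1)] by force
  have "\<phi> 0 < \<phi> (- (min d \<delta> / 2))" using d assms(2) by auto
  moreover have "\<phi> (- (min d \<delta> / 2)) \<le> \<phi> 0" using assms d by auto
  ultimately show False by simp
qed

lemma d1: "1 + \<gamma> * a > 0 \<Longrightarrow>
  ((\<lambda>t. ln (1 + \<gamma> * (a + t * b))) has_real_derivative (\<gamma> * b / (1 + \<gamma> * a))) (at 0)"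
  by (rule derivative_eq_intros refl | simp)+

lemma d2: "w \<noteq> 0 \<Longrightarrow> 1 + \<gamma> * (B - a) / w > 0 \<Longrightarrow>
  ((\<lambda>t. ln (1 + \<gamma> * (B - (a + t * b)) / w)) has_real_derivative (- (\<gamma> * b / w) / (1 + \<gamma> * (B - a) / w))) (at 0)"
  by (rule derivative_eq_intros refl | simp)+ (simp add: field_simps)

lemma Ssum_lin: "Ssum (\<lambda>i. \<xi> i + t * v i) k = Ssum \<xi> k + t * Ssum v k"
  by (simp add: Ssum_def sum.distrib sum_distrib_left)

lemma deriv_F:
  fixes \<xi> v :: "nat \<Rightarrow> real"
  assumes w: "w > 0" and N: "N \<ge> 1"
    and pos1: "\<forall>j\<in>{1..N}. 1 + \<gamma> * \<xi> j > 0"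
    and pos2: "\<forall>k\<in>{1..N}. 1 + \<gamma> * (B - Ssum \<xi> k) / real w > 0"
  shows "((\<lambda>t. Fm p \<gamma> B w N (\<lambda>i. \<xi> i + t * v i)) has_real_derivative
     ((\<Sum>j=1..N. (1-p)^j * (\<gamma> * v j / (1 + \<gamma> * \<xi> j)))
      - ((\<Sum>k=1..N-1. p * (1-p)^k * (\<gamma> * Ssum v k / (1 + \<gamma> * (B - Ssum \<xi> k) / real w)))
         + (1-p)^N * (\<gamma> * Ssum v N / (1 + \<gamma> * (B - Ssum \<xi> N) / real w))))) (at 0)"
proof -
  have e: "(\<lambda>t. Fm p \<gamma> B w N (\<lambda>i. \<xi> i + t * v i)) = (\<lambda>t. (\<Sum>j=1..N. (1-p)^j * ln (1 + \<gamma> * (\<xi> j + t * v j)))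
     + real w * ((\<Sum>k=1..N-1. p * (1-p)^k * ln (1 + \<gamma> * (B - (Ssum \<xi> k + t * Ssum v k)) / real w))
                 + (1-p)^N * ln (1 + \<gamma> * (B - (Ssum \<xi> N + t * Ssum v N)) / real w)))"
    by (simp add: Fm_def Ssum_lin)
  have A: "((\<lambda>t. (\<Sum>j=1..N. (1-p)^j * ln (1 + \<gamma> * (\<xi> j + t * v j)))) has_real_derivative
       (\<Sum>j=1..N. (1-p)^j * (\<gamma> * v j / (1 + \<gamma> * \<xi> j)))) (at 0)"
    by (rule DERIV_sum, rule DERIV_cmult, rule d1) (use pos1 in auto)
  have B1: "((\<lambda>t. (\<Sum>k=1..N-1. p * (1-p)^k * ln (1 + \<gamma> * (B - (Ssum \<xi> k + t * Ssum v k)) / real w))) has_real_derivative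
       (\<Sum>k=1..N-1. p * (1-p)^k * (- (\<gamma> * Ssum v k / real w) / (1 + \<gamma> * (B - Ssum \<xi> k) / real w)))) (at 0)"
    by (rule DERIV_sum, rule DERIV_cmult, rule d2) (use pos2 w in auto)
  have B2: "((\<lambda>t. (1-p)^N * ln (1 + \<gamma> * (B - (Ssum \<xi> N + t * Ssum v N)) / real w)) has_real_derivative
       (1-p)^N * (- (\<gamma> * Ssum v N / real w) / (1 + \<gamma> * (B - Ssum \<xi> N) / real w))) (at 0)"
    by (rule DERIV_cmult, rule d2) (use pos2 assms in auto)
  have "((\<lambda>t. Fm p \<gamma> B w N (\<lambda>i. \<xi> i + t * v i)) has_real_derivative
     ((\<Sum>j=1..N. (1-p)^j * (\<gamma> * v j / (1 + \<gamma> * \<xi> j))) + real w *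
       ((\<Sum>k=1..N-1. p * (1-p)^k * (- (\<gamma> * Ssum v k / real w) / (1 + \<gamma> * (B - Ssum \<xi> k) / real w)))
        + (1-p)^N * (- (\<gamma> * Ssum v N / real w) / (1 + \<gamma> * (B - Ssum \<xi> N) / real w))))) (at 0)"
    unfolding e by (intro DERIV_add DERIV_cmult A B1 B2)
  moreover have "real w *
       ((\<Sum>k=1..N-1. p * (1-p)^k * (- (\<gamma> * Ssum v k / real w) / (1 + \<gamma> * (B - Ssum \<xi> k) / real w)))
        + (1-p)^N * (- (\<gamma> * Ssum v N / real w) / (1 + \<gamma> * (B - Ssum \<xi> N) / real w)))
     = - ((\<Sum>k=1..N-1. p * (1-p)^k * (\<gamma> * Ssum v k / (1 + \<gamma> * (B - Ssum \<xi> k) / real w)))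
         + (1-p)^N * (\<gamma> * Ssum v N / (1 + \<gamma> * (B - Ssum \<xi> N) / real w)))"
  proof -
    have t: "real w * (c * (- (\<gamma> * x / real w) / (1 + \<gamma> * y / real w))) = - (c * (\<gamma> * x / (1 + \<gamma> * y / real w)))" for c x y
      using w by (simp add: field_simps)
    show ?thesis by (simp only: distrib_left sum_distrib_left t sum_negf minus_add_distrib)
  qed
  ultimately show ?thesis by (simp only: diff_conv_add_uminus)
qed


lemma sum_x: "(\<Sum>j=1..n. (if 1 \<le> j \<and> j \<le> N then \<eta> j else 0)) = Ssum \<eta> (min n N)"
proof (induction n)
  case 0 then show ?case by (simp add: Ssum_def)
next
  case (Suc n)
  show ?case
  proof (cases "Suc n \<le> N")
    case True
    then have "min (Suc n) N = Suc n" "min n N = n" by auto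
    then show ?thesis using Suc True by (simp add: Ssum_def)
  next
    case False
    then have "min (Suc n) N = min n N" by auto
    then show ?thesis using Suc False by (simp add: Ssum_def)
  qed
qed

lemma TN_eq:
  assumes p: "0 < p" "p < 1" and w: "1 \<le> w" and N: "1 \<le> N"
  shows "T_N p \<gamma> B w N \<eta> =
    (\<Sum>k=1..w. p\<^sup>2 * (1 - p) ^ (k - 1) * (real k / 2) * log 2 (1 + \<gamma> * B / real k))
    + (p * (1-p)^(w-1) / (2 * ln 2)) * Fm p \<gamma> B w N \<eta>"
proof -
  define q where "q = 1 - p"
  define K where "K = p * q^(w-1) / (2 * ln 2)"
  define x where "x = (\<lambda>j. if 1 \<le> j \<and> j \<le> N then \<eta> j else 0)"
  have qp: "0 < q" "q < 1" using p by (auto simp: q_def)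
  obtain w' where ww: "w = Suc w'" using w by (cases w) auto
  obtain N' where NN: "N = Suc N'" using N by (cases N) auto
  have pw: "q ^ (j + w - 1) = q^j * q^(w-1)" for j using w by (simp add: power_add[symmetric])
  have s2: "(\<Sum>j. p * (1 - p) ^ (Suc j + w - 1) * (1/2) * log 2 (1 + \<gamma> * x (Suc j)))
      = K * (\<Sum>j=1..N. q^j * ln (1 + \<gamma> * \<eta> j))"
  proof -
    have "(\<Sum>j. p * (1 - p) ^ (Suc j + w - 1) * (1/2) * log 2 (1 + \<gamma> * x (Suc j)))
        = (\<Sum>j<N. p * (1 - p) ^ (Suc j + w - 1) * (1/2) * log 2 (1 + \<gamma> * x (Suc j)))"
      by (rule suminf_finite) (auto simp: x_def)
    also have "\<dots> = (\<Sum>j=1..N. p * q ^ (j + w - 1) * (1/2) * log 2 (1 + \<gamma> * \<eta> j))"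
      by (simp add: sum.atLeast1_atMost_eq x_def q_def)
    also have "\<dots> = (\<Sum>j=1..N. K * (q^j * ln (1 + \<gamma> * \<eta> j)))"
      by (rule sum.cong) (auto simp: K_def ww power_add log_def)
    finally show ?thesis by (simp add: sum_distrib_left)
  qed
  define LL where "LL = (\<lambda>k. ln (1 + \<gamma> * (B - Ssum \<eta> k) / real w))"
  define g where "g = (\<lambda>k. p\<^sup>2 * (1 - p) ^ (Suc k + w - 1) * (real w / 2)
          * log 2 (1 + \<gamma> * (B - (\<Sum>j=1..Suc k. x j)) / real w))"
  have gshift: "g (n + (N-1)) = (p\<^sup>2 * q^(N+w-1) * (real w / 2) * (LL N / ln 2)) * q^n" for n
  proof -
    have "min (Suc (n + (N-1))) N = N" using N by auto
    moreover have "Suc (n + (N - 1)) + w - 1 = n + (N + w - 1)" using N w by auto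
    ultimately show ?thesis
      unfolding g_def x_def sum_x LL_def q_def log_def by (simp add: power_add NN ww)
  qed
  have sg: "summable g"
  proof -
    have "summable (\<lambda>n. g (n + (N-1)))" unfolding gshift
      by (rule summable_mult, rule summable_geometric) (use qp in auto)
    then show ?thesis by simp
  qed
  have tail: "(\<Sum>n. g (n + (N-1))) = K * (real w * (q^N * LL N))"
  proof -
    have "(\<Sum>n. g (n + (N-1))) = (p\<^sup>2 * q^(N+w-1) * (real w / 2) * (LL N / ln 2)) * (1 / (1 - q))"
      unfolding gshift by (subst suminf_mult, rule summable_geometric) (use qp in \<open>auto simp: suminf_geometric\<close>)
    also have "\<dots> = K * (real w * (q^N * LL N))"
      using p by (simp add: K_def q_def ww power_add power2_eq_square field_simps)
    finally show ?thesis .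
  qed
  have head: "(\<Sum>i<N-1. g i) = K * (real w * (\<Sum>k=1..N-1. p * q^k * LL k))"
  proof -
    have "(\<Sum>k=1..N-1. K * (real w * (p * q^k * LL k))) = (\<Sum>i<N-1. K * (real w * (p * q^(Suc i) * LL (Suc i))))"
      by (simp add: sum.atLeast1_atMost_eq)
    also have "\<dots> = (\<Sum>i<N-1. g i)"
    proof (rule sum.cong)
      fix i assume "i \<in> {..<N-1}"
      then have "min (Suc i) N = Suc i" by auto
      then show "K * (real w * (p * q^(Suc i) * LL (Suc i))) = g i"
        unfolding g_def x_def sum_x LL_def K_def q_def log_def
        by (simp add: ww power_add power2_eq_square field_simps)
    qed simp
    finally show ?thesis by (simp add: sum_distrib_left)
  qed
  have s3: "suminf g = K * (real w * ((\<Sum>k=1..N-1. p * q^k * LL k) + q^N * LL N))"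
    using suminf_split_initial_segment[OF sg, of "N-1"] tail head by (simp add: algebra_simps)
  have "T_N p \<gamma> B w N \<eta> =
    (\<Sum>k=1..w. p\<^sup>2 * (1 - p) ^ (k - 1) * (real k / 2) * log 2 (1 + \<gamma> * B / real k))
    + (\<Sum>j. p * (1 - p) ^ (Suc j + w - 1) * (1/2) * log 2 (1 + \<gamma> * x (Suc j))) + suminf g"
    unfolding T_N_def T_inf_def g_def x_def ..
  also have "\<dots> = (\<Sum>k=1..w. p\<^sup>2 * (1 - p) ^ (k - 1) * (real k / 2) * log 2 (1 + \<gamma> * B / real k))
    + K * (\<Sum>j=1..N. q^j * ln (1 + \<gamma> * \<eta> j)) + K * (real w * ((\<Sum>k=1..N-1. p * q^k * LL k) + q^N * LL N))"
    using s2 s3 by simp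
  also have "\<dots> = (\<Sum>k=1..w. p\<^sup>2 * (1 - p) ^ (k - 1) * (real k / 2) * log 2 (1 + \<gamma> * B / real k))
    + (p * (1-p)^(w-1) / (2 * ln 2)) * Fm p \<gamma> B w N \<eta>"
    unfolding Fm_def LL_def K_def q_def by (simp add: algebra_simps)
  finally show ?thesis .
qed


definition Dv :: "real \<Rightarrow> real \<Rightarrow> real \<Rightarrow> nat \<Rightarrow> nat \<Rightarrow> (nat \<Rightarrow> real) \<Rightarrow> (nat \<Rightarrow> real) \<Rightarrow> real" where
  "Dv p \<gamma> B w N \<xi> v = (\<Sum>j=1..N. (1-p)^j * (\<gamma> * v j / (1 + \<gamma> * \<xi> j)))
      - ((\<Sum>k=1..N-1. p * (1-p)^k * (\<gamma> * Ssum v k / (1 + \<gamma> * (B - Ssum \<xi> k) / real w)))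
         + (1-p)^N * (\<gamma> * Ssum v N / (1 + \<gamma> * (B - Ssum \<xi> N) / real w)))"

lemma Ssum_eN: "Ssum (\<lambda>i. if i = N then 1 else 0) k = (if 1 \<le> N \<and> N \<le> k then 1 else 0)"
  unfolding Ssum_def by (simp add: sum.delta')

lemma Dv_eN:
  assumes "1 \<le> N"
  shows "Dv p \<gamma> B w N \<xi> (\<lambda>i. if i = N then 1 else 0)
     = (1-p)^N * \<gamma> * (1 / (1 + \<gamma> * \<xi> N) - 1 / (1 + \<gamma> * (B - Ssum \<xi> N) / real w))"
proof -
  have "(\<Sum>k=1..N-1. p * (1-p)^k * (\<gamma> * Ssum (\<lambda>i. if i = N then 1 else 0) k / (1 + \<gamma> * (B - Ssum \<xi> k) / real w))) = 0"
    by (rule sum.neutral) (auto simp: Ssum_eN)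
  moreover have "(\<Sum>j=1..N. (1-p)^j * (\<gamma> * (if j = N then 1 else 0) / (1 + \<gamma> * \<xi> j)))
      = (1-p)^N * (\<gamma> / (1 + \<gamma> * \<xi> N))"
  proof -
    have "(\<Sum>j=1..N. (1-p)^j * (\<gamma> * (if j = N then 1 else 0) / (1 + \<gamma> * \<xi> j)))
      = (\<Sum>j=1..N. if j = N then (1-p)^j * (\<gamma> / (1 + \<gamma> * \<xi> j)) else 0)"
      by (rule sum.cong) auto
    then show ?thesis using assms by (simp add: sum.delta')
  qed
  ultimately show ?thesis using assms unfolding Dv_def by (simp add: Ssum_eN algebra_simps)
qed

lemma Ssum_ej:
  assumes "1 \<le> j"
  shows "Ssum (\<lambda>i. (if i = j then 1 else 0) - (if i = Suc j then 1 else 0)) k = (if k = j then 1 else 0)"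
  using assms unfolding Ssum_def by (simp add: sum_subtractf sum.delta')

lemma Dv_ej:
  assumes "1 \<le> j" "j < N"
  shows "Dv p \<gamma> B w N \<xi> (\<lambda>i. (if i = j then 1 else 0) - (if i = Suc j then 1 else 0))
     = \<gamma> * ((1-p)^j / (1 + \<gamma> * \<xi> j) - (1-p)^(Suc j) / (1 + \<gamma> * \<xi> (Suc j))
             - p * (1-p)^j / (1 + \<gamma> * (B - Ssum \<xi> j) / real w))"
proof -
  have "(\<Sum>k=1..N-1. p * (1-p)^k * (\<gamma> * Ssum (\<lambda>i. (if i = j then 1 else 0) - (if i = Suc j then 1 else 0)) k / (1 + \<gamma> * (B - Ssum \<xi> k) / real w)))
     = (\<Sum>k=1..N-1. if k = j then p * (1-p)^k * (\<gamma> / (1 + \<gamma> * (B - Ssum \<xi> k) / real w)) else 0)"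
    by (rule sum.cong) (auto simp: Ssum_ej[OF assms(1)])
  also have "\<dots> = p * (1-p)^j * (\<gamma> / (1 + \<gamma> * (B - Ssum \<xi> j) / real w))"
    using assms by (simp add: sum.delta')
  finally have A: "(\<Sum>k=1..N-1. p * (1-p)^k * (\<gamma> * Ssum (\<lambda>i. (if i = j then 1 else 0) - (if i = Suc j then 1 else 0)) k / (1 + \<gamma> * (B - Ssum \<xi> k) / real w)))
     = p * (1-p)^j * (\<gamma> / (1 + \<gamma> * (B - Ssum \<xi> j) / real w))" .
  have "(\<Sum>i=1..N. (1-p)^i * (\<gamma> * ((if i = j then 1 else 0) - (if i = Suc j then 1 else 0)) / (1 + \<gamma> * \<xi> i)))
     = (\<Sum>i=1..N. (if i = j then (1-p)^i * (\<gamma> / (1 + \<gamma> * \<xi> i)) else 0) - (if i = Suc j then (1-p)^i * (\<gamma> / (1 + \<gamma> * \<xi> i)) else 0))"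
    by (rule sum.cong) auto
  also have "\<dots> = (1-p)^j * (\<gamma> / (1 + \<gamma> * \<xi> j)) - (1-p)^(Suc j) * (\<gamma> / (1 + \<gamma> * \<xi> (Suc j)))"
    using assms by (simp add: sum_subtractf sum.delta')
  finally have B: "(\<Sum>i=1..N. (1-p)^i * (\<gamma> * ((if i = j then 1 else 0) - (if i = Suc j then 1 else 0)) / (1 + \<gamma> * \<xi> i)))
     = (1-p)^j * (\<gamma> / (1 + \<gamma> * \<xi> j)) - (1-p)^(Suc j) * (\<gamma> / (1 + \<gamma> * \<xi> (Suc j)))" .
  show ?thesis unfolding Dv_def A B using assms by (simp add: Ssum_ej[OF assms(1)] algebra_simps add_divide_distrib[symmetric])
qed


lemma feas_lin: "feasible_N B N (\<lambda>i. \<xi> i + t * v i) \<longleftrightarrow>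
   (\<forall>j\<in>{1..N}. 0 \<le> \<xi> j + t * v j) \<and> Ssum \<xi> N + t * Ssum v N \<le> B"
  unfolding feasible_N_def Ssum_lin[symmetric] by (simp add: Ssum_def)

lemma Ssum_const_after:
  assumes "\<forall>i. m < i \<and> i \<le> N \<longrightarrow> \<xi> i = 0" "m \<le> N"
  shows "Ssum \<xi> N = Ssum \<xi> m"
proof -
  have "m + d \<le> N \<Longrightarrow> Ssum \<xi> (m + d) = Ssum \<xi> m" for d
  proof (induction d)
    case 0 then show ?case by simp
  next
    case (Suc d)
    then have "\<xi> (Suc (m + d)) = 0" using assms by auto
    then show ?case using Suc by (simp add: Ssum_def)
  qed
  from this[of "N - m"] assms show ?thesis by simp
qed

lemma inv_lt1: "0 < (x::real) \<Longrightarrow> 1 / (1 + x) < 1"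
  by (simp add: divide_less_eq)

theorem lemma6:
  fixes p \<gamma> B :: real and w N :: nat and \<xi> :: "nat \<Rightarrow> real"
  assumes "0 < p" "p < 1" "0 < \<gamma>" "0 < B" "1 \<le> w" "1 \<le> N"
    and "is_maximizer_N p \<gamma> B w N \<xi>"
  shows "\<xi> N = (B - (\<Sum>i=1..N. \<xi> i)) / real w \<and>
    (\<forall>j\<in>{1..N-1}. (1 - p) / (1 + \<gamma> * \<xi> (j+1))
           = 1 / (1 + \<gamma> * \<xi> j) - p / (1 + (\<gamma> / real w) * (B - (\<Sum>i=1..j. \<xi> i))))"
proof -
  note p = assms(1,2) and g = assms(3) and Bp = assms(4) and w = assms(5) and N = assms(6)
  define q where "q = 1 - p"
  have q: "0 < q" "q < 1" using p by (auto simp: q_def)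
  have wr: "real w > 0" using w by simp
  have feas: "feasible_N B N \<xi>" and maxT: "\<And>\<eta>. feasible_N B N \<eta> \<Longrightarrow> T_N p \<gamma> B w N \<eta> \<le> T_N p \<gamma> B w N \<xi>"
    using assms(7) unfolding is_maximizer_N_def by auto
  have nn: "\<And>j. j \<in> {1..N} \<Longrightarrow> 0 \<le> \<xi> j" and SN: "Ssum \<xi> N \<le> B"
    using feas unfolding feasible_N_def Ssum_def by auto
  have Smono: "Ssum \<xi> k \<le> Ssum \<xi> N" if "k \<le> N" for k
    unfolding Ssum_def by (rule sum_mono2) (use that nn in auto)
  have Snn: "0 \<le> Ssum \<xi> k" if "k \<le> N" for k
    unfolding Ssum_def by (rule sum_nonneg) (use that nn in auto)
  have Kpos: "p * (1-p)^(w-1) / (2 * ln 2) > 0" using p by simp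
  have Fmax: "Fm p \<gamma> B w N \<eta> \<le> Fm p \<gamma> B w N \<xi>" if "feasible_N B N \<eta>" for \<eta>
  proof -
    have "p * (1-p)^(w-1) / (2 * ln 2) * Fm p \<gamma> B w N \<eta> \<le> p * (1-p)^(w-1) / (2 * ln 2) * Fm p \<gamma> B w N \<xi>"
      using maxT[OF that] unfolding TN_eq[OF p w N] by linarith
    then show ?thesis using Kpos by (rule mult_left_le_imp_le)
  qed
  have pos1: "\<forall>j\<in>{1..N}. 1 + \<gamma> * \<xi> j > 0"
    using nn g by (simp add: add_pos_nonneg)
  have pos2: "\<forall>k\<in>{1..N}. 1 + \<gamma> * (B - Ssum \<xi> k) / real w > 0"
  proof
    fix k assume "k \<in> {1..N}"
    then have "0 \<le> B - Ssum \<xi> k" using Smono SN by force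
    then show "1 + \<gamma> * (B - Ssum \<xi> k) / real w > 0" using g wr by (simp add: add_pos_nonneg)
  qed
  have der: "((\<lambda>t. Fm p \<gamma> B w N (\<lambda>i. \<xi> i + t * v i)) has_real_derivative Dv p \<gamma> B w N \<xi> v) (at 0)" for v
    unfolding Dv_def by (rule deriv_F[OF _ N pos1 pos2]) (use w in simp)
  have R: "Dv p \<gamma> B w N \<xi> v \<le> 0"
    if "\<delta> > 0" "\<forall>t. 0 < t \<and> t < \<delta> \<longrightarrow> feasible_N B N (\<lambda>i. \<xi> i + t * v i)" for v \<delta>
    by (rule max_right[OF der that(1)]) (use that Fmax in auto)
  have L: "Dv p \<gamma> B w N \<xi> v \<ge> 0"
    if "\<delta> > 0" "\<forall>t. 0 < t \<and> t < \<delta> \<longrightarrow> feasible_N B N (\<lambda>i. \<xi> i + (-t) * v i)" for v \<delta>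
    by (rule max_left[OF der that(1)]) (use that Fmax in auto)
  define eN where "eN = (\<lambda>i::nat. if i = N then (1::real) else 0)"
  define ej where "ej = (\<lambda>j i::nat. (if i = j then (1::real) else 0) - (if i = Suc j then 1 else 0))"
  have SeN: "Ssum eN N = 1" using N unfolding eN_def by (simp add: Ssum_eN)
  have Sej: "Ssum (ej j) N = 0" if "1 \<le> j" "j < N" for j
    unfolding ej_def using Ssum_ej[OF that(1)] that by simp
  have slack: "Ssum \<xi> N < B"
  proof (rule ccontr)
    assume "\<not> Ssum \<xi> N < B"
    with SN have SB: "Ssum \<xi> N = B" by simp
    define M where "M = {j\<in>{1..N}. \<xi> j > 0}"
    have finM: "finite M" unfolding M_def by simp
    have "M \<noteq> {}"
    proof
      assume "M = {}"
      then have "\<forall>j\<in>{1..N}. \<xi> j = 0" using nn unfolding M_def by force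
      then have "Ssum \<xi> N = 0" unfolding Ssum_def by simp
      with SB Bp show False by simp
    qed
    define m where "m = Max M"
    have mM: "m \<in> M" unfolding m_def using finM \<open>M \<noteq> {}\<close> by simp
    have mmax: "\<And>j. j \<in> M \<Longrightarrow> j \<le> m" unfolding m_def using finM by simp
    have m1: "1 \<le> m" "m \<le> N" "\<xi> m > 0" using mM unfolding M_def by auto
    show False
    proof (cases "m = N")
      case True
      have "Dv p \<gamma> B w N \<xi> eN \<ge> 0"
      proof (rule L[of "\<xi> N"])
        show "\<xi> N > 0" using m1 True by simp
        show "\<forall>t. 0 < t \<and> t < \<xi> N \<longrightarrow> feasible_N B N (\<lambda>i. \<xi> i + (-t) * eN i)"
          unfolding feas_lin SeN using nn SB by (auto simp: eN_def)
      qed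
      moreover have "Dv p \<gamma> B w N \<xi> eN < 0"
      proof -
        have "1 / (1 + \<gamma> * \<xi> N) < 1" using m1 True g by (intro inv_lt1) simp
        then show ?thesis unfolding eN_def Dv_eN[OF N] SB using p g by (intro mult_pos_neg) auto
      qed
      ultimately show False by simp
    next
      case False
      then have mN: "m < N" using m1 by simp
      have zero: "\<forall>i. m < i \<and> i \<le> N \<longrightarrow> \<xi> i = 0"
      proof (intro allI impI)
        fix i assume i: "m < i \<and> i \<le> N"
        then have "i \<notin> M" using mmax by force
        then show "\<xi> i = 0" using nn[of i] i m1 unfolding M_def by force
      qed
      have Sm: "Ssum \<xi> m = B" using Ssum_const_after[OF zero m1(2)] SB by simp
      have xs: "\<xi> (Suc m) = 0" using zero mN by simp
      have "Dv p \<gamma> B w N \<xi> (ej m) \<ge> 0"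
      proof (rule L[of "\<xi> m"])
        show "\<xi> m > 0" using m1 by simp
        show "\<forall>t. 0 < t \<and> t < \<xi> m \<longrightarrow> feasible_N B N (\<lambda>i. \<xi> i + (-t) * ej m i)"
          unfolding feas_lin Sej[OF m1(1) mN] using nn SB xs by (auto simp: ej_def)
      qed
      moreover have "Dv p \<gamma> B w N \<xi> (ej m) < 0"
      proof -
        have a: "1 / (1 + \<gamma> * \<xi> m) < 1" using m1 g by (intro inv_lt1) simp
        have "Dv p \<gamma> B w N \<xi> (ej m) = \<gamma> * (q^m * (1 / (1 + \<gamma> * \<xi> m) - 1))"
          unfolding ej_def Dv_ej[OF m1(1) mN] Sm xs q_def by (simp add: algebra_simps)
        also have "\<dots> < 0" using a q g by (simp add: mult_pos_neg)
        finally show ?thesis .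
      qed
      ultimately show False by simp
    qed
  qed
  have xNpos: "\<xi> N > 0"
  proof (rule ccontr)
    assume "\<not> \<xi> N > 0"
    then have x0: "\<xi> N = 0" using nn[of N] N by simp
    have "Dv p \<gamma> B w N \<xi> eN \<le> 0"
    proof (rule R[of "B - Ssum \<xi> N"])
      show "B - Ssum \<xi> N > 0" using slack by simp
      show "\<forall>t. 0 < t \<and> t < B - Ssum \<xi> N \<longrightarrow> feasible_N B N (\<lambda>i. \<xi> i + t * eN i)"
        unfolding feas_lin SeN using nn by (auto simp: eN_def)
    qed
    moreover have "Dv p \<gamma> B w N \<xi> eN > 0"
    proof -
      have "1 / (1 + \<gamma> * (B - Ssum \<xi> N) / real w) < 1" using slack g wr by (intro inv_lt1) simp
      then show ?thesis unfolding eN_def Dv_eN[OF N] x0 using p g by (intro mult_pos_pos) auto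
    qed
    ultimately show False by simp
  qed
  have DeN0: "Dv p \<gamma> B w N \<xi> eN = 0"
  proof -
    have "Dv p \<gamma> B w N \<xi> eN \<le> 0"
    proof (rule R[of "B - Ssum \<xi> N"])
      show "B - Ssum \<xi> N > 0" using slack by simp
      show "\<forall>t. 0 < t \<and> t < B - Ssum \<xi> N \<longrightarrow> feasible_N B N (\<lambda>i. \<xi> i + t * eN i)"
        unfolding feas_lin SeN using nn by (auto simp: eN_def)
    qed
    moreover have "Dv p \<gamma> B w N \<xi> eN \<ge> 0"
    proof (rule L[of "\<xi> N"])
      show "\<xi> N > 0" by (rule xNpos)
      show "\<forall>t. 0 < t \<and> t < \<xi> N \<longrightarrow> feasible_N B N (\<lambda>i. \<xi> i + (-t) * eN i)"
        unfolding feas_lin SeN using nn SN by (auto simp: eN_def)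
    qed
    ultimately show ?thesis by simp
  qed
  have part1: "\<xi> N = (B - (\<Sum>i=1..N. \<xi> i)) / real w"
  proof -
    have "1 / (1 + \<gamma> * \<xi> N) = 1 / (1 + \<gamma> * (B - Ssum \<xi> N) / real w)"
      using DeN0 q g unfolding eN_def Dv_eN[OF N] q_def by simp
    then have "1 + \<gamma> * \<xi> N = 1 + \<gamma> * (B - Ssum \<xi> N) / real w" by simp
    then have "\<gamma> * \<xi> N = \<gamma> * ((B - Ssum \<xi> N) / real w)" by simp
    then have "\<xi> N = (B - Ssum \<xi> N) / real w" using g by (metis mult_cancel_left less_irrefl)
    then show ?thesis unfolding Ssum_def by simp
  qed
  have allpos: "\<xi> j > 0" if "j \<in> {1..N}" for j
  proof (rule ccontr)
    assume "\<not> \<xi> j > 0"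
    define Z where "Z = {j\<in>{1..N}. \<xi> j \<le> 0}"
    have finZ: "finite Z" unfolding Z_def by simp
    have "Z \<noteq> {}" using that \<open>\<not> \<xi> j > 0\<close> unfolding Z_def by auto
    define k where "k = Max Z"
    have kZ: "k \<in> Z" unfolding k_def using finZ \<open>Z \<noteq> {}\<close> by simp
    have kmax: "\<And>j. j \<in> Z \<Longrightarrow> j \<le> k" unfolding k_def using finZ by simp
    have k1: "1 \<le> k" "k \<le> N" "\<xi> k = 0" using kZ nn unfolding Z_def by force+
    have kN: "k < N" using k1 xNpos by (cases "k = N") auto
    have xs: "\<xi> (Suc k) > 0"
    proof -
      have "Suc k \<notin> Z" using kmax by force
      then show ?thesis using kN unfolding Z_def by auto
    qed
    have "Dv p \<gamma> B w N \<xi> (ej k) \<le> 0"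
    proof (rule R[of "\<xi> (Suc k)"])
      show "\<xi> (Suc k) > 0" by (rule xs)
      show "\<forall>t. 0 < t \<and> t < \<xi> (Suc k) \<longrightarrow> feasible_N B N (\<lambda>i. \<xi> i + t * ej k i)"
        unfolding feas_lin Sej[OF k1(1) kN] using nn SN by (auto simp: ej_def)
    qed
    moreover have "Dv p \<gamma> B w N \<xi> (ej k) > 0"
    proof -
      define a where "a = 1 / (1 + \<gamma> * \<xi> (Suc k))"
      define c where "c = 1 / (1 + \<gamma> * (B - Ssum \<xi> k) / real w)"
      have a: "a < 1" unfolding a_def using xs g by (intro inv_lt1) simp
      have c: "c \<le> 1"
      proof -
        have "0 \<le> B - Ssum \<xi> k" using Smono[OF k1(2)] SN by simp
        then have "1 \<le> 1 + \<gamma> * (B - Ssum \<xi> k) / real w" using g wr by simp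
        then show ?thesis unfolding c_def by simp
      qed
      have "Dv p \<gamma> B w N \<xi> (ej k) = \<gamma> * q^k * (1 - q * a - p * c)"
        unfolding ej_def Dv_ej[OF k1(1) kN] k1(3) a_def c_def q_def by (simp add: algebra_simps)
      moreover have "1 - q * a - p * c > 0"
      proof -
        have "q * a < q" using a q by simp
        moreover have "p * c \<le> p" using c p by (simp add: mult_left_le)
        ultimately show ?thesis unfolding q_def by simp
      qed
      ultimately show ?thesis using g q by simp
    qed
    ultimately show False by simp
  qed
  have part2: "\<forall>j\<in>{1..N-1}. (1 - p) / (1 + \<gamma> * \<xi> (j+1))
           = 1 / (1 + \<gamma> * \<xi> j) - p / (1 + (\<gamma> / real w) * (B - (\<Sum>i=1..j. \<xi> i)))"
  proof
    fix j assume j: "j \<in> {1..N-1}"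
    then have j1: "1 \<le> j" and jN: "j < N" using N by auto
    have "Dv p \<gamma> B w N \<xi> (ej j) \<le> 0"
    proof (rule R[of "\<xi> (Suc j)"])
      show "\<xi> (Suc j) > 0" using allpos j1 jN by simp
      show "\<forall>t. 0 < t \<and> t < \<xi> (Suc j) \<longrightarrow> feasible_N B N (\<lambda>i. \<xi> i + t * ej j i)"
        unfolding feas_lin Sej[OF j1 jN] using nn SN by (auto simp: ej_def)
    qed
    moreover have "Dv p \<gamma> B w N \<xi> (ej j) \<ge> 0"
    proof (rule L[of "\<xi> j"])
      show "\<xi> j > 0" using allpos j1 jN by simp
      have "0 \<le> \<xi> (Suc j)" using nn[of "Suc j"] jN by simp
      then show "\<forall>t. 0 < t \<and> t < \<xi> j \<longrightarrow> feasible_N B N (\<lambda>i. \<xi> i + (-t) * ej j i)"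
        unfolding feas_lin Sej[OF j1 jN] using nn SN by (auto simp: ej_def)
    qed
    ultimately have "Dv p \<gamma> B w N \<xi> (ej j) = 0" by simp
    then have "(1-p)^j / (1 + \<gamma> * \<xi> j) - (1-p)^(Suc j) / (1 + \<gamma> * \<xi> (Suc j))
             - p * (1-p)^j / (1 + \<gamma> * (B - Ssum \<xi> j) / real w) = 0"
      unfolding ej_def Dv_ej[OF j1 jN] using g by simp
    then have "(1-p)^j * (1 / (1 + \<gamma> * \<xi> j) - (1-p) / (1 + \<gamma> * \<xi> (Suc j))
             - p / (1 + \<gamma> * (B - Ssum \<xi> j) / real w)) = 0"
      by (simp add: algebra_simps)
    then have "1 / (1 + \<gamma> * \<xi> j) - (1-p) / (1 + \<gamma> * \<xi> (Suc j))
             - p / (1 + \<gamma> * (B - Ssum \<xi> j) / real w) = 0"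
      using p by simp
    moreover have "\<gamma> * (B - Ssum \<xi> j) / real w = (\<gamma> / real w) * (B - (\<Sum>i=1..j. \<xi> i))"
      unfolding Ssum_def by simp
    ultimately show "(1 - p) / (1 + \<gamma> * \<xi> (j+1))
           = 1 / (1 + \<gamma> * \<xi> j) - p / (1 + (\<gamma> / real w) * (B - (\<Sum>i=1..j. \<xi> i)))"
      by simp
  qed
  show ?thesis using part1 part2 by blast
qed

end
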